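(* Let $A$ be an associative algebra, $M$ an $A$-bimodule, $H:A\otimes A\to M$ a Hochschild $2$-cocycle, and $\{ T_\alpha : M \to A \}_{\alpha \in \Omega}$ an $H$-twisted $\mathcal{O}$-operator family. Define on $M$ the operations $u \ast_{\alpha, \beta} v = T_\alpha (u) \cdot v + u \cdot T_\beta (v) + H (T_\alpha (u), T_\beta (v))$, and define bilinear maps $\triangleright_{\alpha,\beta}: M\otimes A\to A$, $\triangleleft_{\alpha,\beta}: A\otimes M\to A$ by $$u \triangleright_{\alpha, \beta} a := T_\alpha (u) \cdot a - T_{\alpha \beta} (u \cdot a) - T_{\alpha \beta} \big( H (T_\alpha (u), a) \big),\qquad a \triangleleft_{\alpha, \beta} u := a \cdot T_\beta (u) - T_{\alpha \beta} (a \cdot u) - T_{\alpha \beta} \big( H (a, T_\beta (u)) \big).$$ Then $(M,\{\ast_{\alpha,\beta}\}_{\alpha,\beta\in\Omega})$ is an $\Omega$-associative algebra and $(A, \{ \triangleright_{\alpha, \beta}, \triangleleft_{\alpha, \beta} \}_{\alpha, \beta \in \Omega})$ is a bimodule over it (with $\triangleright$ the left action and $\triangleleft$ the right action).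
   Context: $\Omega$ is a semigroup. A Hochschild $2$-cocycle is a bilinear $H$ with $a \cdot H (b, c) - H ( a \cdot b, c)+ H (a, b \cdot c) - H (a, b) \cdot c =0$. An $H$-twisted $\mathcal{O}$-operator family: linear maps $T_\alpha:M\to A$ with $T_\alpha (u) \cdot T_\beta (v) = T_{\alpha \beta} \big( T_\alpha (u) \cdot v + u \cdot T_\beta (v) + H (T_\alpha (u), T_\beta (v)) \big)$ for all $u,v,\alpha,\beta$. An $\Omega$-associative algebra is a vector space $B$ with bilinear maps $\{\cdot_{\alpha,\beta}\}_{\alpha,\beta\in\Omega}$ with $(a \cdot_{\alpha , \beta} b) \cdot_{\alpha \beta, \gamma} c = a \cdot_{\alpha, \beta \gamma} (b \cdot_{\beta, \gamma} c)$ for all $a,b,c$, $\alpha,\beta,\gamma$. A bimodule over it is a vector space $N$ with bilinear maps $B\otimes N\to N$, $(a,n)\mapsto a\cdot_{\alpha,\beta}n$ and $N\otimes B\to N$, $(n,a)\mapsto n\cdot_{\alpha,\beta}a$ ($\alpha,\beta\in\Omega$) such that $(a \cdot_{\alpha , \beta} b) \cdot_{\alpha \beta, \gamma} n = a \cdot_{\alpha, \beta \gamma} (b \cdot_{\beta, \gamma} n)$, $(a \cdot_{\alpha , \beta} n) \cdot_{\alpha \beta, \gamma} b = a \cdot_{\alpha, \beta \gamma} (n \cdot_{\beta, \gamma} b)$, $(n \cdot_{\alpha , \beta} a) \cdot_{\alpha \beta, \gamma} b = n \cdot_{\alpha, \beta \gamma} (a \cdot_{\beta, \gamma} b)$. 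*)

theory Defs
  imports Main "HOL.Vector_Spaces"
begin

text \<open>Vector spaces over a field 'k are given by scalar multiplications
  (library locale vector_space); linearity is the library predicate linear.\<close>

definition bilinear_map ::
  "('k::field \<Rightarrow> 'x::ab_group_add \<Rightarrow> 'x) \<Rightarrow> ('k \<Rightarrow> 'y::ab_group_add \<Rightarrow> 'y) \<Rightarrow>
   ('k \<Rightarrow> 'z::ab_group_add \<Rightarrow> 'z) \<Rightarrow> ('x \<Rightarrow> 'y \<Rightarrow> 'z) \<Rightarrow> bool" where
  "bilinear_map sX sY sZ f \<longleftrightarrow>
     (\<forall>x. Vector_Spaces.linear sY sZ (f x)) \<and> (\<forall>y. Vector_Spaces.linear sX sZ (\<lambda>x. f x y))"

definition assoc_algebra ::
  "('k::field \<Rightarrow> 'a::ab_group_add \<Rightarrow> 'a) \<Rightarrow> ('a \<Rightarrow> 'a \<Rightarrow> 'a) \<Rightarrow> bool" where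
  "assoc_algebra sA mA \<longleftrightarrow> vector_space sA \<and> bilinear_map sA sA sA mA \<and>
     (\<forall>a b c. mA (mA a b) c = mA a (mA b c))"

definition alg_bimodule ::
  "('k::field \<Rightarrow> 'a::ab_group_add \<Rightarrow> 'a) \<Rightarrow> ('a \<Rightarrow> 'a \<Rightarrow> 'a) \<Rightarrow>
   ('k \<Rightarrow> 'm::ab_group_add \<Rightarrow> 'm) \<Rightarrow> ('a \<Rightarrow> 'm \<Rightarrow> 'm) \<Rightarrow> ('m \<Rightarrow> 'a \<Rightarrow> 'm) \<Rightarrow> bool" where
  "alg_bimodule sA mA sM lM rM \<longleftrightarrow> vector_space sM \<and>
     bilinear_map sA sM sM lM \<and> bilinear_map sM sA sM rM \<and>
     (\<forall>a b u. lM (mA a b) u = lM a (lM b u)) \<and>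
     (\<forall>a u b. rM (lM a u) b = lM a (rM u b)) \<and>
     (\<forall>u a b. rM (rM u a) b = rM u (mA a b))"

definition hochschild_2cocycle ::
  "('k::field \<Rightarrow> 'a::ab_group_add \<Rightarrow> 'a) \<Rightarrow> ('a \<Rightarrow> 'a \<Rightarrow> 'a) \<Rightarrow>
   ('k \<Rightarrow> 'm::ab_group_add \<Rightarrow> 'm) \<Rightarrow> ('a \<Rightarrow> 'm \<Rightarrow> 'm) \<Rightarrow> ('m \<Rightarrow> 'a \<Rightarrow> 'm) \<Rightarrow>
   ('a \<Rightarrow> 'a \<Rightarrow> 'm) \<Rightarrow> bool" where
  "hochschild_2cocycle sA mA sM lM rM H \<longleftrightarrow> bilinear_map sA sA sM H \<and>
     (\<forall>a b c. lM a (H b c) - H (mA a b) c + H a (mA b c) - rM (H a b) c = 0)"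

definition twisted_O_operator_family ::
  "('k::field \<Rightarrow> 'a::ab_group_add \<Rightarrow> 'a) \<Rightarrow> ('a \<Rightarrow> 'a \<Rightarrow> 'a) \<Rightarrow>
   ('k \<Rightarrow> 'm::ab_group_add \<Rightarrow> 'm) \<Rightarrow> ('a \<Rightarrow> 'm \<Rightarrow> 'm) \<Rightarrow> ('m \<Rightarrow> 'a \<Rightarrow> 'm) \<Rightarrow>
   ('a \<Rightarrow> 'a \<Rightarrow> 'm) \<Rightarrow> ('o::semigroup_mult \<Rightarrow> 'm \<Rightarrow> 'a) \<Rightarrow> bool" where
  "twisted_O_operator_family sA mA sM lM rM H T \<longleftrightarrow>
     (\<forall>\<alpha>. Vector_Spaces.linear sM sA (T \<alpha>)) \<and>
     (\<forall>\<alpha> \<beta> u v. mA (T \<alpha> u) (T \<beta> v) =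
        T (\<alpha> * \<beta>) (lM (T \<alpha> u) v + rM u (T \<beta> v) + H (T \<alpha> u) (T \<beta> v)))"

definition omega_assoc_algebra ::
  "('k::field \<Rightarrow> 'b::ab_group_add \<Rightarrow> 'b) \<Rightarrow> ('o::semigroup_mult \<Rightarrow> 'o \<Rightarrow> 'b \<Rightarrow> 'b \<Rightarrow> 'b) \<Rightarrow> bool" where
  "omega_assoc_algebra sB m \<longleftrightarrow> vector_space sB \<and>
     (\<forall>\<alpha> \<beta>. bilinear_map sB sB sB (m \<alpha> \<beta>)) \<and>
     (\<forall>a b c \<alpha> \<beta> \<gamma>. m (\<alpha> * \<beta>) \<gamma> (m \<alpha> \<beta> a b) c = m \<alpha> (\<beta> * \<gamma>) a (m \<beta> \<gamma> b c))"

definition omega_bimodule ::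
  "('k::field \<Rightarrow> 'b::ab_group_add \<Rightarrow> 'b) \<Rightarrow> ('o::semigroup_mult \<Rightarrow> 'o \<Rightarrow> 'b \<Rightarrow> 'b \<Rightarrow> 'b) \<Rightarrow>
   ('k \<Rightarrow> 'n::ab_group_add \<Rightarrow> 'n) \<Rightarrow> ('o \<Rightarrow> 'o \<Rightarrow> 'b \<Rightarrow> 'n \<Rightarrow> 'n) \<Rightarrow>
   ('o \<Rightarrow> 'o \<Rightarrow> 'n \<Rightarrow> 'b \<Rightarrow> 'n) \<Rightarrow> bool" where
  "omega_bimodule sB m sN l r \<longleftrightarrow> vector_space sN \<and>
     (\<forall>\<alpha> \<beta>. bilinear_map sB sN sN (l \<alpha> \<beta>)) \<and>
     (\<forall>\<alpha> \<beta>. bilinear_map sN sB sN (r \<alpha> \<beta>)) \<and>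
     (\<forall>a b n \<alpha> \<beta> \<gamma>. l (\<alpha> * \<beta>) \<gamma> (m \<alpha> \<beta> a b) n = l \<alpha> (\<beta> * \<gamma>) a (l \<beta> \<gamma> b n)) \<and>
     (\<forall>a n b \<alpha> \<beta> \<gamma>. r (\<alpha> * \<beta>) \<gamma> (l \<alpha> \<beta> a n) b = l \<alpha> (\<beta> * \<gamma>) a (r \<beta> \<gamma> n b)) \<and>
     (\<forall>n a b \<alpha> \<beta> \<gamma>. r (\<alpha> * \<beta>) \<gamma> (r \<alpha> \<beta> n a) b = r \<alpha> (\<beta> * \<gamma>) n (m \<beta> \<gamma> a b))"

end

theory Submission
  imports Defs
begin


lemma lin_add: "Vector_Spaces.linear s1 s2 f \<Longrightarrow> f (x + y) = f x + f y"
  by (simp add: Vector_Spaces.linear_iff)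
lemma lin_diff: "Vector_Spaces.linear s1 s2 f \<Longrightarrow> f (x - y) = f x - f y"
  by (rule module_hom.diff[OF module_hom_iff_linear[THEN iffD2]])
lemma lin_addf: "Vector_Spaces.linear s1 s2 f \<Longrightarrow> Vector_Spaces.linear s1 s2 g \<Longrightarrow> Vector_Spaces.linear s1 s2 (\<lambda>x. f x + g x)"
  by (auto simp: Vector_Spaces.linear_iff module.scale_right_distrib module_iff_vector_space)
lemma lin_difff: "Vector_Spaces.linear s1 s2 f \<Longrightarrow> Vector_Spaces.linear s1 s2 g \<Longrightarrow> Vector_Spaces.linear s1 s2 (\<lambda>x. f x - g x)"
  by (auto simp: Vector_Spaces.linear_iff module.scale_right_diff_distrib module_iff_vector_space)
lemma lin_comp: "Vector_Spaces.linear s1 s2 f \<Longrightarrow> Vector_Spaces.linear s2 s3 g \<Longrightarrow> Vector_Spaces.linear s1 s3 (\<lambda>x. g (f x))"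
  using Vector_Spaces.linear_compose[of s1 s2 f s3 g] by (simp add: o_def)

lemma coc_aux: "(x::'a::ab_group_add) - y + z - w = 0 \<Longrightarrow> y = x + z - w"
  by (simp add: algebra_simps)

theorem theorem4p4:
  fixes sA :: "'k::field \<Rightarrow> 'a::ab_group_add \<Rightarrow> 'a"
    and mA :: "'a \<Rightarrow> 'a \<Rightarrow> 'a"
    and sM :: "'k \<Rightarrow> 'm::ab_group_add \<Rightarrow> 'm"
    and lM :: "'a \<Rightarrow> 'm \<Rightarrow> 'm"
    and rM :: "'m \<Rightarrow> 'a \<Rightarrow> 'm"
    and H :: "'a \<Rightarrow> 'a \<Rightarrow> 'm"
    and T :: "'o::semigroup_mult \<Rightarrow> 'm \<Rightarrow> 'a"
  assumes "assoc_algebra sA mA"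
    and "alg_bimodule sA mA sM lM rM"
    and "hochschild_2cocycle sA mA sM lM rM H"
    and "twisted_O_operator_family sA mA sM lM rM H T"
  shows "omega_assoc_algebra sM
           (\<lambda>\<alpha> \<beta> u v. lM (T \<alpha> u) v + rM u (T \<beta> v) + H (T \<alpha> u) (T \<beta> v))
       \<and> omega_bimodule sM
           (\<lambda>\<alpha> \<beta> u v. lM (T \<alpha> u) v + rM u (T \<beta> v) + H (T \<alpha> u) (T \<beta> v))
           sA
           (\<lambda>\<alpha> \<beta> u a. mA (T \<alpha> u) a - T (\<alpha> * \<beta>) (rM u a) - T (\<alpha> * \<beta>) (H (T \<alpha> u) a))
           (\<lambda>\<alpha> \<beta> a u. mA a (T \<beta> u) - T (\<alpha> * \<beta>) (lM a u) - T (\<alpha> * \<beta>) (H a (T \<beta> u)))"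
proof -
  note A1 = assms(1)[unfolded assoc_algebra_def bilinear_map_def]
  note A2 = assms(2)[unfolded alg_bimodule_def bilinear_map_def]
  note A3 = assms(3)[unfolded hochschild_2cocycle_def bilinear_map_def]
  note A4 = assms(4)[unfolded twisted_O_operator_family_def]
  have vsM: "vector_space sM" using A2 by (rule conjunct1)
  have vsA: "vector_space sA" using A1 by (rule conjunct1)
  have "(\<forall>x. Vector_Spaces.linear sA sA (mA x)) \<and> (\<forall>y. Vector_Spaces.linear sA sA (\<lambda>x. mA x y))
     \<and> (\<forall>a b c. mA (mA a b) c = mA a (mA b c))" using A1 by (simp only: simp_thms)
  then have mA1: "\<And>x. Vector_Spaces.linear sA sA (mA x)"
    and mA2: "\<And>y. Vector_Spaces.linear sA sA (\<lambda>x. mA x y)"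
    and assA: "\<And>a b c. mA (mA a b) c = mA a (mA b c)" by simp_all
  have "((\<forall>x. Vector_Spaces.linear sM sM (lM x)) \<and> (\<forall>y. Vector_Spaces.linear sA sM (\<lambda>x. lM x y)))
     \<and> ((\<forall>x. Vector_Spaces.linear sA sM (rM x)) \<and> (\<forall>y. Vector_Spaces.linear sM sM (\<lambda>x. rM x y)))
     \<and> (\<forall>a b u. lM (mA a b) u = lM a (lM b u))
     \<and> (\<forall>a u b. rM (lM a u) b = lM a (rM u b))
     \<and> (\<forall>u a b. rM (rM u a) b = rM u (mA a b))" using A2 by (rule conjunct2)
  then have lM1: "\<And>x. Vector_Spaces.linear sM sM (lM x)"
    and lM2: "\<And>y. Vector_Spaces.linear sA sM (\<lambda>x. lM x y)"
    and rM1: "\<And>x. Vector_Spaces.linear sA sM (rM x)"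
    and rM2: "\<And>y. Vector_Spaces.linear sM sM (\<lambda>x. rM x y)"
    and ll: "\<And>a b u. lM (mA a b) u = lM a (lM b u)"
    and lr: "\<And>a u b. rM (lM a u) b = lM a (rM u b)"
    and rr: "\<And>u a b. rM (rM u a) b = rM u (mA a b)" by simp_all
  from A3 have H1: "\<And>x. Vector_Spaces.linear sA sM (H x)"
    and H2: "\<And>y. Vector_Spaces.linear sA sM (\<lambda>x. H x y)"
    and coc: "\<And>a b c. lM a (H b c) - H (mA a b) c + H a (mA b c) - rM (H a b) c = 0" by simp_all
  from A4 have TL: "\<And>\<alpha>. Vector_Spaces.linear sM sA (T \<alpha>)"
    and O: "\<And>\<alpha> \<beta> u v. mA (T \<alpha> u) (T \<beta> v) =
        T (\<alpha> * \<beta>) (lM (T \<alpha> u) v + rM u (T \<beta> v) + H (T \<alpha> u) (T \<beta> v))" by simp_all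
  have Hc: "\<And>a b c. H (mA a b) c = lM a (H b c) + H a (mA b c) - rM (H a b) c"
    using coc_aux[OF coc] .
  have mAd1: "\<And>x y z. mA z (x + y) = mA z x + mA z y" by (rule lin_add[OF mA1])
  have mAs1: "\<And>x y z. mA z (x - y) = mA z x - mA z y" by (rule lin_diff[OF mA1])
  have mAd2: "\<And>x y z. mA (x + y) z = mA x z + mA y z" by (rule lin_add[OF mA2])
  have mAs2: "\<And>x y z. mA (x - y) z = mA x z - mA y z" by (rule lin_diff[OF mA2])
  have lMd1: "\<And>x y z. lM z (x + y) = lM z x + lM z y" by (rule lin_add[OF lM1])
  have lMs1: "\<And>x y z. lM z (x - y) = lM z x - lM z y" by (rule lin_diff[OF lM1])
  have lMd2: "\<And>x y z. lM (x + y) z = lM x z + lM y z" by (rule lin_add[OF lM2])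
  have lMs2: "\<And>x y z. lM (x - y) z = lM x z - lM y z" by (rule lin_diff[OF lM2])
  have rMd1: "\<And>x y z. rM z (x + y) = rM z x + rM z y" by (rule lin_add[OF rM1])
  have rMs1: "\<And>x y z. rM z (x - y) = rM z x - rM z y" by (rule lin_diff[OF rM1])
  have rMd2: "\<And>x y z. rM (x + y) z = rM x z + rM y z" by (rule lin_add[OF rM2])
  have rMs2: "\<And>x y z. rM (x - y) z = rM x z - rM y z" by (rule lin_diff[OF rM2])
  have Hd1: "\<And>x y z. H z (x + y) = H z x + H z y" by (rule lin_add[OF H1])
  have Hs1: "\<And>x y z. H z (x - y) = H z x - H z y" by (rule lin_diff[OF H1])
  have Hd2: "\<And>x y z. H (x + y) z = H x z + H y z" by (rule lin_add[OF H2])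
  have Hs2: "\<And>x y z. H (x - y) z = H x z - H y z" by (rule lin_diff[OF H2])
  have Td: "\<And>\<alpha> x y. T \<alpha> (x + y) = T \<alpha> x + T \<alpha> y" by (rule lin_add[OF TL])
  have Ts: "\<And>\<alpha> x y. T \<alpha> (x - y) = T \<alpha> x - T \<alpha> y" by (rule lin_diff[OF TL])
  note D = mAd1 mAs1 mAd2 mAs2 lMd1 lMs1 lMd2 lMs2 rMd1 rMs1 rMd2 rMs2 Hd1 Hs1 Hd2 Hs2 Td Ts
  note S = assA ll lr rr Hc

  let ?m = "\<lambda>\<alpha> \<beta> u v. lM (T \<alpha> u) v + rM u (T \<beta> v) + H (T \<alpha> u) (T \<beta> v)"
  let ?l = "\<lambda>\<alpha> \<beta> u a. mA (T \<alpha> u) a - T (\<alpha> * \<beta>) (rM u a) - T (\<alpha> * \<beta>) (H (T \<alpha> u) a)"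
  let ?r = "\<lambda>\<alpha> \<beta> a u. mA a (T \<beta> u) - T (\<alpha> * \<beta>) (lM a u) - T (\<alpha> * \<beta>) (H a (T \<beta> u))"

  have bm: "bilinear_map sM sM sM (?m \<alpha> \<beta>)" for \<alpha> \<beta>
    unfolding bilinear_map_def
  proof (intro allI conjI)
    fix u
    show "Vector_Spaces.linear sM sM (?m \<alpha> \<beta> u)"
      by (rule lin_addf[OF lin_addf[OF lM1 lin_comp[OF TL[of \<beta>] rM1[of u]]] lin_comp[OF TL[of \<beta>] H1[of "T \<alpha> u"]]])
  next
    fix v
    show "Vector_Spaces.linear sM sM (\<lambda>u. ?m \<alpha> \<beta> u v)"
      by (rule lin_addf[OF lin_addf[OF lin_comp[OF TL[of \<alpha>] lM2[of v]] rM2] lin_comp[OF TL[of \<alpha>] H2[of "T \<beta> v"]]])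
  qed
  have bl: "bilinear_map sM sA sA (?l \<alpha> \<beta>)" for \<alpha> \<beta>
    unfolding bilinear_map_def
  proof (intro allI conjI)
    fix u
    show "Vector_Spaces.linear sA sA (?l \<alpha> \<beta> u)"
      by (rule lin_difff[OF lin_difff[OF mA1 lin_comp[OF rM1[of u] TL[of "\<alpha>*\<beta>"]]] lin_comp[OF H1[of "T \<alpha> u"] TL[of "\<alpha>*\<beta>"]]])
  next
    fix a
    show "Vector_Spaces.linear sM sA (\<lambda>u. ?l \<alpha> \<beta> u a)"
      by (rule lin_difff[OF lin_difff[OF lin_comp[OF TL[of \<alpha>] mA2[of a]] lin_comp[OF rM2[of a] TL[of "\<alpha>*\<beta>"]]]
          lin_comp[OF lin_comp[OF TL[of \<alpha>] H2[of a]] TL[of "\<alpha>*\<beta>"]]])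
  qed
  have br: "bilinear_map sA sM sA (?r \<alpha> \<beta>)" for \<alpha> \<beta>
    unfolding bilinear_map_def
  proof (intro allI conjI)
    fix a
    show "Vector_Spaces.linear sM sA (?r \<alpha> \<beta> a)"
      by (rule lin_difff[OF lin_difff[OF lin_comp[OF TL[of \<beta>] mA1[of a]] lin_comp[OF lM1[of a] TL[of "\<alpha>*\<beta>"]]]
          lin_comp[OF lin_comp[OF TL[of \<beta>] H1[of a]] TL[of "\<alpha>*\<beta>"]]])
  next
    fix u
    show "Vector_Spaces.linear sA sA (\<lambda>a. ?r \<alpha> \<beta> a u)"
      by (rule lin_difff[OF lin_difff[OF mA2 lin_comp[OF lM2[of u] TL[of "\<alpha>*\<beta>"]]] lin_comp[OF H2[of "T \<beta> u"] TL[of "\<alpha>*\<beta>"]]])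
  qed

  have ax1: "?m (\<alpha> * \<beta>) \<gamma> (?m \<alpha> \<beta> u v) w = ?m \<alpha> (\<beta> * \<gamma>) u (?m \<beta> \<gamma> v w)" for u v w \<alpha> \<beta> \<gamma>
  proof -
    have e1: "T (\<alpha>*\<beta>) (?m \<alpha> \<beta> u v) = mA (T \<alpha> u) (T \<beta> v)" using O by simp
    have e2: "T (\<beta>*\<gamma>) (?m \<beta> \<gamma> v w) = mA (T \<beta> v) (T \<gamma> w)" using O by simp
    show ?thesis
      apply (simp only: e1 e2)
      apply (simp only: D S)
      apply (simp add: algebra_simps)
      done
  qed
  have ax2: "?l (\<alpha> * \<beta>) \<gamma> (?m \<alpha> \<beta> u v) a = ?l \<alpha> (\<beta> * \<gamma>) u (?l \<beta> \<gamma> v a)" for u v a \<alpha> \<beta> \<gamma>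
  proof -
    have e1: "T (\<alpha>*\<beta>) (?m \<alpha> \<beta> u v) = mA (T \<alpha> u) (T \<beta> v)" using O by simp
    note O1 = O[of \<alpha> u "\<beta>*\<gamma>" "rM v a"]
    note O2 = O[of \<alpha> u "\<beta>*\<gamma>" "H (T \<beta> v) a"]
    show ?thesis
      apply (simp only: e1 mult.assoc)
      apply (simp only: D S O1 O2)
      apply (simp add: algebra_simps)
      done
  qed
  have ax3: "?r (\<alpha> * \<beta>) \<gamma> (?l \<alpha> \<beta> u x) v = ?l \<alpha> (\<beta> * \<gamma>) u (?r \<beta> \<gamma> x v)" for u v x \<alpha> \<beta> \<gamma>
  proof -
    have O3: "mA (T (\<alpha>*\<beta>) (rM u x)) (T \<gamma> v) = T (\<alpha>*(\<beta>*\<gamma>)) (lM (T (\<alpha>*\<beta>) (rM u x)) v + rM (rM u x) (T \<gamma> v) + H (T (\<alpha>*\<beta>) (rM u x)) (T \<gamma> v))"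
      using O[of "\<alpha>*\<beta>" "rM u x" \<gamma> v] by (simp add: mult.assoc)
    have O4: "mA (T (\<alpha>*\<beta>) (H (T \<alpha> u) x)) (T \<gamma> v) = T (\<alpha>*(\<beta>*\<gamma>)) (lM (T (\<alpha>*\<beta>) (H (T \<alpha> u) x)) v + rM (H (T \<alpha> u) x) (T \<gamma> v) + H (T (\<alpha>*\<beta>) (H (T \<alpha> u) x)) (T \<gamma> v))"
      using O[of "\<alpha>*\<beta>" "H (T \<alpha> u) x" \<gamma> v] by (simp add: mult.assoc)
    note O5 = O[of \<alpha> u "\<beta>*\<gamma>" "lM x v"]
    note O6 = O[of \<alpha> u "\<beta>*\<gamma>" "H x (T \<gamma> v)"]
    show ?thesis
      apply (simp only: mult.assoc)
      apply (simp only: D S O3 O4 O5 O6)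
      apply (simp add: algebra_simps)
      done
  qed
  have ax4: "?r (\<alpha> * \<beta>) \<gamma> (?r \<alpha> \<beta> x u) v = ?r \<alpha> (\<beta> * \<gamma>) x (?m \<beta> \<gamma> u v)" for u v x \<alpha> \<beta> \<gamma>
  proof -
    have e: "T (\<beta>*\<gamma>) (?m \<beta> \<gamma> u v) = mA (T \<beta> u) (T \<gamma> v)" using O by simp
    have O7: "mA (T (\<alpha>*\<beta>) (lM x u)) (T \<gamma> v) = T (\<alpha>*(\<beta>*\<gamma>)) (lM (T (\<alpha>*\<beta>) (lM x u)) v + rM (lM x u) (T \<gamma> v) + H (T (\<alpha>*\<beta>) (lM x u)) (T \<gamma> v))"
      using O[of "\<alpha>*\<beta>" "lM x u" \<gamma> v] by (simp add: mult.assoc)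
    have O8: "mA (T (\<alpha>*\<beta>) (H x (T \<beta> u))) (T \<gamma> v) = T (\<alpha>*(\<beta>*\<gamma>)) (lM (T (\<alpha>*\<beta>) (H x (T \<beta> u))) v + rM (H x (T \<beta> u)) (T \<gamma> v) + H (T (\<alpha>*\<beta>) (H x (T \<beta> u))) (T \<gamma> v))"
      using O[of "\<alpha>*\<beta>" "H x (T \<beta> u)" \<gamma> v] by (simp add: mult.assoc)
    show ?thesis
      apply (simp only: e mult.assoc)
      apply (simp only: D S O7 O8)
      apply (simp add: algebra_simps)
      done
  qed
  show ?thesis
    unfolding omega_assoc_algebra_def omega_bimodule_def
    by (intro conjI allI vsM vsA bm bl br ax1 ax2 ax3 ax4)
qed

end
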